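(* Let $\mathbb{F}$ be a field, $n\ge 1$, and $A,B\in M(n,\mathbb{F})$. Then $A\sim_{M(n,\mathbb{F})} B$ if and only if $A_s$ and $B_s$ are conjugate by an invertible matrix, i.e. there exists $g\in \mathrm{GL}(n,\mathbb{F})$ with $B_s=gA_sg^{-1}$.
   Context: $M(n,\mathbb{F})$ denotes the semigroup of all $n\times n$ matrices over $\mathbb{F}$ under ordinary matrix multiplication, identified with linear operators on $\mathbb{F}^n$; its group of units is $\mathrm{GL}(n,\mathbb{F})$. Two elements $a,b$ of a semigroup $S$ are primarily $S$-conjugated if there are $x,y\in S$ with $a=xy$ and $b=yx$; the relation $\sim_S$ ($S$-conjugacy) is the transitive closure of primary $S$-conjugacy. For $A\in M(n,\mathbb{F})$ let $t\ge 0$ be such that $A^t(\mathbb{F}^n)=A^{t+i}(\mathbb{F}^n)$ for all $i\ge 0$ (such $t$ exists, e.g. $t=n$); then $\mathbb{F}^n=A^t(\mathbb{F}^n)\oplus\ker(A^t)$, and $A_s$ denotes the linear operator with $A_s(v)=A(v)$ for $v\in A^t(\mathbb{F}^n)$ and $A_s(v)=0$ for $v\in\ker(A^t)$ (this does not depend on the choice of such $t$). *)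

theory Defs
  imports "HOL-Analysis.Analysis"
begin

text \<open>Square matrices over a field: type 'a^'n^'n, 'n a finite (nonempty) index type, so n = CARD('n) \<ge> 1.\<close>

definition primary_conj :: "('a::field)^'n^'n \<Rightarrow> 'a^'n^'n \<Rightarrow> bool" where
  "primary_conj a b \<longleftrightarrow> (\<exists>x y. a = x ** y \<and> b = y ** x)"

definition mconj :: "('a::field)^'n^'n \<Rightarrow> 'a^'n^'n \<Rightarrow> bool" where
  "mconj = tranclp primary_conj"

definition mat_pow :: "('a::field)^'n^'n \<Rightarrow> nat \<Rightarrow> 'a^'n^'n" where
  "mat_pow A k = (((**) A) ^^ k) (mat 1)"

text \<open>A_s, using t = n (= CARD('n)): acts as A on the image of A^t and as 0 on the kernel of A^t.\<close>
definition stable_part :: "('a::field)^'n^'n \<Rightarrow> 'a^'n^'n" where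
  "stable_part A = (THE S.
      (\<forall>v. S *v (mat_pow A CARD('n) *v v) = A *v (mat_pow A CARD('n) *v v)) \<and>
      (\<forall>v. mat_pow A CARD('n) *v v = 0 \<longrightarrow> S *v v = 0))"

end

theory Submission
  imports Defs
begin


lemma mat_pow_0[simp]: "mat_pow A 0 = mat 1" by (simp add: mat_pow_def)
lemma mat_pow_Suc: "mat_pow A (Suc k) = A ** mat_pow A k" by (simp add: mat_pow_def)
lemma mat_pow_add: "mat_pow A (a + b) = mat_pow A a ** mat_pow A b"
  by (induction a) (simp_all add: mat_pow_Suc matrix_mul_assoc)
lemma mat_pow_Suc': "mat_pow A (Suc k) = mat_pow A k ** A"
  using mat_pow_add[of A k 1] by (simp add: mat_pow_Suc)

definition Rg :: "('a::field)^'n^'n \<Rightarrow> nat \<Rightarrow> ('a^'n) set" where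
  "Rg A k = range (\<lambda>v. mat_pow A k *v v)"
definition Kr :: "('a::field)^'n^'n \<Rightarrow> nat \<Rightarrow> ('a^'n) set" where
  "Kr A k = {v. mat_pow A k *v v = 0}"

lemma Rg_Suc: "Rg A (Suc k) = (\<lambda>v. A *v v) ` Rg A k"
  by (auto simp: Rg_def mat_pow_Suc matrix_vector_mul_assoc image_iff)
lemma Kr_Suc: "Kr A (Suc k) = (\<lambda>v. A *v v) -` Kr A k"
  by (auto simp: Kr_def mat_pow_Suc' matrix_vector_mul_assoc)
lemma Rg_subspace: "vec.subspace (Rg A k)"
  unfolding Rg_def using vec.subspace_image[OF vec.subspace_UNIV] by simp
lemma Kr_subspace: "vec.subspace (Kr A k)"
proof -
  have "Kr A k = (\<lambda>v. mat_pow A k *v v) -` {0}" by (auto simp: Kr_def)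
  then show ?thesis using vec.subspace_vimage[OF vec.subspace_single_0] by simp
qed

lemma dec_stab:
  fixes S :: "nat \<Rightarrow> ('a::field^'n) set"
  assumes sub: "\<And>k. vec.subspace (S k)" and dec: "\<And>k. S (Suc k) \<subseteq> S k"
  shows "\<exists>k\<le>CARD('n). S (Suc k) = S k"
proof (rule ccontr)
  assume "\<not> ?thesis"
  then have lt: "vec.dim (S (Suc k)) < vec.dim (S k)" if "k \<le> CARD('n)" for k
    using that dec[of k] sub vec.dim_psubset vec.span_eq_iff by (metis psubsetI)
  have "vec.dim (S k) + k \<le> CARD('n)" if "k \<le> Suc CARD('n)" for k
    using that
  proof (induction k)
    case 0 show ?case using vec.dim_subset[of "S 0" UNIV] vec_dim_card[where 'a='a and 'n='n] by simp
  next
    case (Suc k) then show ?case using lt[of k] by simp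
  qed
  from this[of "Suc CARD('n)"] show False by simp
qed

lemma inc_stab:
  fixes S :: "nat \<Rightarrow> ('a::field^'n) set"
  assumes sub: "\<And>k. vec.subspace (S k)" and inc: "\<And>k. S k \<subseteq> S (Suc k)"
  shows "\<exists>k\<le>CARD('n). S (Suc k) = S k"
proof (rule ccontr)
  assume "\<not> ?thesis"
  then have lt: "vec.dim (S k) < vec.dim (S (Suc k))" if "k \<le> CARD('n)" for k
    using that inc[of k] sub vec.dim_psubset vec.span_eq_iff by (metis psubsetI)
  have "k \<le> vec.dim (S k)" if "k \<le> Suc CARD('n)" for k
    using that
  proof (induction k)
    case 0 show ?case by simp
  next
    case (Suc k) then show ?case using lt[of k] by simp
  qed
  from this[of "Suc CARD('n)"] show False
    using vec.dim_subset[of "S (Suc CARD('n))" UNIV] vec_dim_card[where 'a='a and 'n='n] by simp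
qed

lemma stab_prop:
  assumes step: "\<And>m. S (Suc m) = F (S m)" and eq: "S (Suc k) = S k" and km: "k \<le> m"
  shows "S m = S k"
  using km
proof (induction m)
  case 0 thus ?case by simp
next
  case (Suc m)
  show ?case
  proof (cases "k \<le> m")
    case True then have "S m = S k" using Suc.IH by simp
    then show ?thesis using step[of m] step[of k] eq by simp
  next
    case False then have "k = Suc m" using Suc.prems by simp
    then show ?thesis by simp
  qed
qed

lemma Rg_stab: "Rg A (CARD('n) + CARD('n)) = Rg (A::('a::field)^'n^'n) CARD('n)"
proof -
  have dec: "Rg A (Suc k) \<subseteq> Rg A k" for k
    by (auto simp: Rg_def mat_pow_Suc' matrix_vector_mul_assoc[symmetric])
  obtain k where k: "k \<le> CARD('n)" "Rg A (Suc k) = Rg A k"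
    using dec_stab[of "Rg A", OF Rg_subspace dec] by blast
  show ?thesis using stab_prop[of "Rg A", OF Rg_Suc k(2)] k(1) by (metis le_add1 order_trans)
qed

lemma Kr_stab: "Kr A (CARD('n) + CARD('n)) = Kr (A::('a::field)^'n^'n) CARD('n)"
proof -
  have inc: "Kr A k \<subseteq> Kr A (Suc k)" for k
    by (auto simp: Kr_def mat_pow_Suc matrix_vector_mul_assoc[symmetric])
  obtain k where k: "k \<le> CARD('n)" "Kr A (Suc k) = Kr A k"
    using inc_stab[of "Kr A", OF Kr_subspace inc] by blast
  show ?thesis using stab_prop[of "Kr A", OF Kr_Suc k(2)] k(1) by (metis le_add1 order_trans)
qed

lemma fit_a:
  fixes A :: "('a::field)^'n^'n"
  defines "M \<equiv> mat_pow A CARD('n)"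
  shows "\<exists>u. M *v (v - M *v u) = 0"
proof -
  have "M *v v \<in> Rg A (CARD('n) + CARD('n))" using Rg_stab[of A] by (auto simp: Rg_def M_def)
  then obtain u where "M *v v = M *v (M *v u)"
    by (auto simp: Rg_def mat_pow_add M_def matrix_vector_mul_assoc)
  then show ?thesis by (auto simp: vec.diff)
qed

lemma fit_b:
  fixes A :: "('a::field)^'n^'n"
  defines "M \<equiv> mat_pow A CARD('n)"
  shows "M *v (M *v u) = 0 \<Longrightarrow> M *v u = 0"
proof -
  assume "M *v (M *v u) = 0"
  then have "u \<in> Kr A (CARD('n) + CARD('n))"
    by (simp add: Kr_def mat_pow_add M_def matrix_vector_mul_assoc)
  then show ?thesis using Kr_stab[of A] unfolding Kr_def M_def by blast
qed



lemma fit_proj: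
  fixes A :: "('a::field)^'n^'n"
  defines "M \<equiv> mat_pow A CARD('n)"
  obtains E where "\<And>v. E *v v \<in> range ((*v) M)" "\<And>v. M *v (v - E *v v) = 0"
     "\<And>u. E *v (M *v u) = M *v u" "\<And>k. M *v k = 0 \<Longrightarrow> E *v k = 0"
     "stable_part A = A ** E"
proof -
  have fa: "\<exists>u. M *v (v - M *v u) = 0" for v using fit_a[of A v] unfolding M_def .
  have fb: "M *v u = 0" if "M *v (M *v u) = 0" for u using fit_b[of A u] that unfolding M_def .
  define f where "f v = M *v (SOME u. M *v (v - M *v u) = 0)" for v
  have uniq: "f v = M *v u" if "M *v (v - M *v u) = 0" for v u
  proof -
    let ?u = "SOME u. M *v (v - M *v u) = 0"
    have "M *v (v - M *v ?u) = 0" using fa[of v] by (rule someI_ex)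
    then have e1: "M *v v = M *v (M *v ?u)" by (simp add: vec.diff)
    have e2: "M *v v = M *v (M *v u)" using that by (simp add: vec.diff)
    have "M *v (M *v (?u - u)) = 0" using e1 e2 by (simp add: vec.diff)
    then have "M *v (?u - u) = 0" using fb by blast
    then show ?thesis by (simp add: f_def vec.diff)
  qed
  have add: "f (v + w) = f v + f w" for v w
  proof -
    obtain u1 where u1: "M *v (v - M *v u1) = 0" using fa by blast
    obtain u2 where u2: "M *v (w - M *v u2) = 0" using fa by blast
    have "M *v ((v + w) - M *v (u1 + u2)) = 0" using u1 u2
      by (simp add: vec.diff vec.add algebra_simps)
    note h = this
    show ?thesis using uniq[OF h] uniq[OF u1] uniq[OF u2] by (simp add: vec.add)
  qed
  have scale: "f (c *s v) = c *s f v" for c v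
  proof -
    obtain u1 where u1: "M *v (v - M *v u1) = 0" using fa by blast
    have "M *v (c *s v - M *v (c *s u1)) = 0" using u1
      by (simp add: vec.diff vec.scale)
    note h = this
    show ?thesis using uniq[OF h] uniq[OF u1] by (simp add: vec.scale)
  qed
  have lin: "Vector_Spaces.linear (*s) (*s) f"
    unfolding Vector_Spaces.linear_iff using vec.vector_space_axioms add scale by blast
  define E where "E = matrix f"
  have Ef: "E *v v = f v" for v unfolding E_def using matrix_works[OF lin] .
  have p1: "E *v v \<in> range ((*v) M)" for v by (simp add: Ef f_def)
  have p2: "M *v (v - E *v v) = 0" for v
  proof -
    obtain u1 where u1: "M *v (v - M *v u1) = 0" using fa by blast
    then show ?thesis using uniq[OF u1] Ef by simp
  qed
  have p3: "E *v (M *v u) = M *v u" for u using uniq[of "M *v u" u] Ef by simp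
  have p4: "E *v k = 0" if "M *v k = 0" for k using uniq[of k 0] that Ef by (simp add: vec.zero)
  have p5: "stable_part A = A ** E"
    unfolding stable_part_def M_def[symmetric]
  proof (rule the_equality)
    show "(\<forall>v. (A ** E) *v (M *v v) = A *v (M *v v)) \<and> (\<forall>v. M *v v = 0 \<longrightarrow> (A ** E) *v v = 0)"
      using p3 p4 by (simp add: matrix_vector_mul_assoc[symmetric] vec.zero)
  next
    fix S assume S: "(\<forall>v. S *v (M *v v) = A *v (M *v v)) \<and> (\<forall>v. M *v v = 0 \<longrightarrow> S *v v = 0)"
    show "S = A ** E" unfolding matrix_eq
    proof
      fix v
      obtain u where u: "E *v v = M *v u" using p1[of v] by blast
      have "S *v v = S *v (E *v v) + S *v (v - E *v v)" by (simp add: vec.diff)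
      also have "\<dots> = A *v (E *v v)" using S p2[of v] u by simp
      finally show "S *v v = (A ** E) *v v" by (simp add: matrix_vector_mul_assoc[symmetric])
    qed
  qed
  show ?thesis using that p1 p2 p3 p4 p5 by blast
qed



definition proj :: "('a::field)^'n^'n \<Rightarrow> ('a^'n) set \<Rightarrow> bool" where
  "proj P W \<longleftrightarrow> (\<forall>v. P *v v \<in> W) \<and> (\<forall>w\<in>W. P *v w = w)"

lemma proj_exists:
  fixes W :: "('a::field^'n) set"
  assumes W: "vec.subspace W"
  shows "\<exists>P::'a^'n^'n. proj P W"
proof -
  obtain B where B: "B \<subseteq> W" "vec.independent B" "W \<subseteq> vec.span B" "card B = vec.dim W"
    using vec.basis_exists by blast
  let ?f = "vec.construct B id"
  have lin: "Vector_Spaces.linear (*s) (*s) ?f" by (rule vec.linear_construct[OF B(2)])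
  have spanB: "vec.span B = W" using B W vec.span_eq_iff vec.span_mono by blast
  have r: "range ?f = W" using vec.range_construct_eq_span[OF B(2), of id] spanB by simp
  have fid: "?f w = w" if "w \<in> W" for w
  proof -
    have cb: "\<And>b. b \<in> B \<Longrightarrow> ?f b = id b" using vec.construct_basis[OF B(2)] by blast
    have "?f w = id w" by (rule vec.linear_eq_on[OF lin vec.linear_id]) (use that spanB cb in auto)
    then show ?thesis by simp
  qed
  have "proj (matrix ?f) W" unfolding proj_def matrix_works[OF lin] using r fid by auto
  then show ?thesis by blast
qed

lemma Rg_dec: "Rg A (Suc k) \<subseteq> Rg A k"
  by (auto simp: Rg_def mat_pow_Suc' matrix_vector_mul_assoc[symmetric])

lemma chain: "proj P (Rg A j) \<Longrightarrow> primary_conj\<^sup>*\<^sup>* A (A ** P)"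
proof (induction j arbitrary: P)
  case 0
  then have "P = mat 1" unfolding matrix_eq proj_def Rg_def by simp
  then show ?case by simp
next
  case (Suc j)
  obtain Q where Q: "proj Q (Rg A j)" using proj_exists[OF Rg_subspace] by blast
  have "primary_conj\<^sup>*\<^sup>* A (A ** Q)" using Suc.IH Q .
  moreover have "primary_conj (A ** Q) (A ** P)"
    unfolding primary_conj_def
  proof (intro exI conjI)
    show "A ** Q = P ** (A ** Q)" unfolding matrix_eq
    proof
      fix v
      have "A *v (Q *v v) \<in> Rg A (Suc j)" using Q unfolding proj_def Rg_Suc by blast
      then show "(A ** Q) *v v = (P ** (A ** Q)) *v v"
        using Suc.prems unfolding proj_def by (simp add: matrix_vector_mul_assoc[symmetric])
    qed
    show "A ** P = (A ** Q) ** P" unfolding matrix_eq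
    proof
      fix v
      have "P *v v \<in> Rg A j" using Suc.prems Rg_dec unfolding proj_def by blast
      then show "(A ** P) *v v = ((A ** Q) ** P) *v v"
        using Q unfolding proj_def by (simp add: matrix_vector_mul_assoc[symmetric])
    qed
  qed
  ultimately show ?case by (rule rtranclp.rtrancl_into_rtrancl)
qed

lemma primary_refl: "primary_conj A A"
  unfolding primary_conj_def by (metis matrix_mul_lid matrix_mul_rid)

lemma primary_sym: "primary_conj A B \<Longrightarrow> primary_conj B A"
  unfolding primary_conj_def by blast

lemma mconj_sym: "mconj A B \<Longrightarrow> mconj B A"
  unfolding mconj_def
proof (induction rule: tranclp_induct)
  case (base y) then show ?case using primary_sym by blast
next
  case (step y z)
  then show ?case using tranclp_into_tranclp2[OF primary_sym[OF step(2)] step(3)] by simp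
qed

lemma mconj_stable:
  fixes A :: "('a::field)^'n^'n"
  shows "mconj A (stable_part A)"
proof -
  obtain E where E: "\<And>v. E *v v \<in> range ((*v) (mat_pow A CARD('n)))"
     "\<And>v. mat_pow A CARD('n) *v (v - E *v v) = 0"
     "\<And>u. E *v (mat_pow A CARD('n) *v u) = mat_pow A CARD('n) *v u"
     "\<And>k. mat_pow A CARD('n) *v k = 0 \<Longrightarrow> E *v k = 0"
     "stable_part A = A ** E"
    using fit_proj[of A] by blast
  have "proj E (Rg A CARD('n))" unfolding proj_def Rg_def using E(1,3) by auto
  then have "primary_conj\<^sup>*\<^sup>* A (stable_part A)" using chain E(5) by simp
  then show ?thesis unfolding mconj_def by (rule rtranclp_into_tranclp2[of primary_conj, OF primary_refl])
qed

lemma inv_props: "invertible (g::('a::field)^'n^'n) \<Longrightarrow> g ** matrix_inv g = mat 1 \<and> matrix_inv g ** g = mat 1"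
  unfolding invertible_def matrix_inv_def by (rule someI_ex)

lemma backward:
  fixes A B :: "('a::field)^'n^'n"
  assumes g: "invertible g" "stable_part B = g ** stable_part A ** matrix_inv g"
  shows "mconj A B"
proof -
  have "primary_conj (stable_part A) (stable_part B)"
    unfolding primary_conj_def
  proof (intro exI conjI)
    show "stable_part A = matrix_inv g ** (g ** stable_part A)"
      using inv_props[OF g(1)] by (simp add: matrix_mul_assoc)
    show "stable_part B = (g ** stable_part A) ** matrix_inv g" using g(2) .
  qed
  then have "mconj (stable_part A) (stable_part B)" unfolding mconj_def by blast
  then show ?thesis using mconj_stable[of A] mconj_sym[OF mconj_stable[of B]]
    unfolding mconj_def using tranclp_trans by metis
qed



lemma swap_pow: "y ** mat_pow (x ** y) k = mat_pow (y ** x) k ** y"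
proof (induction k)
  case (Suc k)
  have "y ** mat_pow (x ** y) (Suc k) = (y ** x) ** (y ** mat_pow (x ** y) k)"
    by (simp add: mat_pow_Suc matrix_mul_assoc)
  also have "\<dots> = mat_pow (y ** x) (Suc k) ** y" using Suc by (simp add: mat_pow_Suc matrix_mul_assoc)
  finally show ?case .
qed simp

lemma pow_comm: "A ** mat_pow A k = mat_pow A k ** A"
  by (metis mat_pow_Suc mat_pow_Suc')

lemma ainj:
  fixes A :: "('a::field)^'n^'n"
  assumes "A *v (mat_pow A CARD('n) *v u) = 0"
  shows "mat_pow A CARD('n) *v u = 0"
proof -
  obtain m where m: "CARD('n) = Suc m" using not0_implies_Suc by (metis zero_less_card_finite less_not_refl)
  have "mat_pow A CARD('n) *v (mat_pow A CARD('n) *v u) = 0"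
    using assms unfolding m mat_pow_Suc' by (simp add: matrix_vector_mul_assoc[symmetric] vec.zero)
  then show ?thesis using fit_b by blast
qed

lemma dimUK:
  fixes A :: "('a::field)^'n^'n"
  shows "vec.dim (range ((*v) (mat_pow A CARD('n)))) + vec.dim {v. mat_pow A CARD('n) *v v = 0} = CARD('n)"
proof -
  let ?M = "mat_pow A CARD('n)"
  let ?U = "range ((*v) ?M)" and ?K = "{v. ?M *v v = 0}"
  have sU: "vec.subspace ?U" using Rg_subspace[of A "CARD('n)"] unfolding Rg_def .
  have sK: "vec.subspace ?K" using Kr_subspace[of A "CARD('n)"] unfolding Kr_def .
  have sum: "{x + y |x y. x \<in> ?U \<and> y \<in> ?K} = UNIV"
  proof -
    have "v \<in> {x + y |x y. x \<in> ?U \<and> y \<in> ?K}" for v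
    proof -
      obtain u where u: "?M *v (v - ?M *v u) = 0" using fit_a by blast
      have "v = ?M *v u + (v - ?M *v u)" by simp
      then show ?thesis using u by blast
    qed
    then show ?thesis by blast
  qed
  have "0 \<in> ?U" by (metis rangeI vec.zero)
  then have int: "?U \<inter> ?K = {0}" using fit_b[of A] by (auto simp: vec.zero)
  show ?thesis using vec.dim_sums_Int[OF sU sK] unfolding sum int
    using vec_dim_card[where 'a='a and 'n='n] by simp
qed

lemma comm_to_conj:
  fixes g X Y :: "('a::field)^'n^'n"
  assumes "invertible g" "Y ** g = g ** X"
  shows "Y = g ** X ** matrix_inv g"
  by (metis assms inv_props matrix_mul_assoc matrix_mul_rid)

lemma conj_to_comm:
  fixes g X Y :: "('a::field)^'n^'n"
  assumes "invertible g" "Y = g ** X ** matrix_inv g"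
  shows "Y ** g = g ** X"
  by (metis assms inv_props matrix_mul_assoc matrix_mul_rid)

lemma primary_sim:
  fixes x y :: "('a::field)^'n^'n"
  shows "\<exists>g. invertible g \<and> stable_part (y ** x) ** g = g ** stable_part (x ** y)"
proof -
  define a where "a = x ** y"
  define b where "b = y ** x"
  define Ma where "Ma = mat_pow a CARD('n)"
  define Mb where "Mb = mat_pow b CARD('n)"
  obtain Ea where Ea: "\<And>v. Ea *v v \<in> range ((*v) Ma)"
     "\<And>v. Ma *v (v - Ea *v v) = 0"
     "\<And>u. Ea *v (Ma *v u) = Ma *v u"
     "\<And>k. Ma *v k = 0 \<Longrightarrow> Ea *v k = 0"
     "stable_part a = a ** Ea"
    using fit_proj[of a] unfolding Ma_def by blast
  obtain Eb where Eb: "\<And>v. Eb *v v \<in> range ((*v) Mb)"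
     "\<And>v. Mb *v (v - Eb *v v) = 0"
     "\<And>u. Eb *v (Mb *v u) = Mb *v u"
     "\<And>k. Mb *v k = 0 \<Longrightarrow> Eb *v k = 0"
     "stable_part b = b ** Eb"
    using fit_proj[of b] unfolding Mb_def by blast
  define Ua where "Ua = range ((*v) Ma)"
  define Ub where "Ub = range ((*v) Mb)"
  define Ka where "Ka = {v. Ma *v v = 0}"
  define Kb where "Kb = {v. Mb *v v = 0}"
  have sUa: "vec.subspace Ua" using Rg_subspace[of a "CARD('n)"] unfolding Rg_def Ua_def Ma_def .
  have sUb: "vec.subspace Ub" using Rg_subspace[of b "CARD('n)"] unfolding Rg_def Ub_def Mb_def .
  have sKa: "vec.subspace Ka" using Kr_subspace[of a "CARD('n)"] unfolding Kr_def Ka_def Ma_def .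
  have sKb: "vec.subspace Kb" using Kr_subspace[of b "CARD('n)"] unfolding Kr_def Kb_def Mb_def .
  have yM: "y ** Ma = Mb ** y" unfolding Ma_def Mb_def a_def b_def by (rule swap_pow)
  have xM: "x ** Mb = Ma ** x" unfolding Ma_def Mb_def a_def b_def by (rule swap_pow)
  have yU: "(*v) y ` Ua \<subseteq> Ub"
  proof
    fix w assume "w \<in> (*v) y ` Ua"
    then obtain u where "w = y *v (Ma *v u)" unfolding Ua_def by blast
    then have "w = Mb *v (y *v u)" by (simp add: matrix_vector_mul_assoc yM)
    then show "w \<in> Ub" unfolding Ub_def by blast
  qed
  have xU: "(*v) x ` Ub \<subseteq> Ua"
  proof
    fix w assume "w \<in> (*v) x ` Ub"
    then obtain u where "w = x *v (Mb *v u)" unfolding Ub_def by blast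
    then have "w = Ma *v (x *v u)" by (simp add: matrix_vector_mul_assoc xM)
    then show "w \<in> Ua" unfolding Ua_def by blast
  qed
  have ainj': "w = 0" if "w \<in> Ua" "a *v w = 0" for w
    using that ainj[of a] unfolding Ua_def Ma_def by auto
  have binj': "w = 0" if "w \<in> Ub" "b *v w = 0" for w
    using that ainj[of b] unfolding Ub_def Mb_def by auto
  have yinj: "inj_on ((*v) y) Ua"
  proof (rule inj_onI)
    fix w1 w2 assume w: "w1 \<in> Ua" "w2 \<in> Ua" "y *v w1 = y *v w2"
    have "w1 - w2 \<in> Ua" using sUa w vec.subspace_diff by blast
    moreover have "a *v (w1 - w2) = 0"
      using w(3) by (simp add: a_def matrix_vector_mul_assoc[symmetric] vec.diff)
    ultimately show "w1 = w2" using ainj' by fastforce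
  qed
  have xinj: "inj_on ((*v) x) Ub"
  proof (rule inj_onI)
    fix w1 w2 assume w: "w1 \<in> Ub" "w2 \<in> Ub" "x *v w1 = x *v w2"
    have "w1 - w2 \<in> Ub" using sUb w vec.subspace_diff by blast
    moreover have "b *v (w1 - w2) = 0"
      using w(3) by (simp add: b_def matrix_vector_mul_assoc[symmetric] vec.diff)
    ultimately show "w1 = w2" using binj' by fastforce
  qed
  have spUa: "vec.span Ua = Ua" using sUa vec.span_eq_iff by blast
  have spUb: "vec.span Ub = Ub" using sUb vec.span_eq_iff by blast
  have d1: "vec.dim Ua \<le> vec.dim Ub"
    using vec.dim_image_eq[OF matrix_vector_mul_linear_gen, of y Ua] yinj spUa
      vec.dim_subset[OF yU] by simp
  have d2: "vec.dim Ub \<le> vec.dim Ua"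
    using vec.dim_image_eq[OF matrix_vector_mul_linear_gen, of x Ub] xinj spUb
      vec.dim_subset[OF xU] by simp
  have yUeq: "(*v) y ` Ua = Ub"
    using vec.subspace_dim_equal[OF vec.subspace_image[OF sUa] sUb yU]
      vec.dim_image_eq[OF matrix_vector_mul_linear_gen, of y Ua] yinj spUa d1 d2
    by simp
  have dK: "vec.dim Ka = vec.dim Kb"
    using dimUK[of a] dimUK[of b] d1 d2 unfolding Ua_def Ub_def Ka_def Kb_def Ma_def Mb_def by simp
  obtain BK where BK: "BK \<subseteq> Ka" "vec.independent BK" "Ka \<subseteq> vec.span BK" "card BK = vec.dim Ka"
    using vec.basis_exists by blast
  obtain CK where CK: "CK \<subseteq> Kb" "vec.independent CK" "Kb \<subseteq> vec.span CK" "card CK = vec.dim Kb"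
    using vec.basis_exists by blast
  obtain h where h: "Vector_Spaces.linear (*s) (*s) h" "h ` Ka = Kb"
    using vec.basis_to_basis_subspace_isomorphism[OF sKa sKb dK BK CK] by blast
  interpret h: Vector_Spaces.linear "(*s)" "(*s)" h by (rule h(1))
  define G where "G v = y *v (Ea *v v) + h (v - Ea *v v)" for v
  have Gadd: "G (v + w) = G v + G w" for v w
  proof -
    have e: "v + w - Ea *v (v + w) = (v - Ea *v v) + (w - Ea *v w)" by (simp add: vec.add algebra_simps)
    have "G (v + w) = y *v (Ea *v v) + y *v (Ea *v w) + (h (v - Ea *v v) + h (w - Ea *v w))"
      unfolding G_def e h.add by (simp add: vec.add)
    then show ?thesis unfolding G_def by (simp add: algebra_simps)
  qed
  have Gscale: "G (c *s v) = c *s G v" for c v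
  proof -
    have e: "c *s v - Ea *v (c *s v) = c *s (v - Ea *v v)" by (simp add: vec.scale algebra_simps)
    have "G (c *s v) = c *s (y *v (Ea *v v)) + c *s h (v - Ea *v v)"
      unfolding G_def e h.scale by (simp add: vec.scale)
    then show ?thesis unfolding G_def by (simp add: vector_space_over_itself.scale_right_distrib vec.scale_right_distrib)
  qed
  have Glin: "Vector_Spaces.linear (*s) (*s) G"
    unfolding Vector_Spaces.linear_iff using vec.vector_space_axioms Gadd Gscale by blast
  define g where "g = matrix G"
  have gG: "g *v v = G v" for v unfolding g_def using matrix_works[OF Glin] .
  have EaU: "Ea *v w = w" if "w \<in> Ua" for w using that Ea(3) unfolding Ua_def by auto
  have EaK: "Ea *v w = 0" if "w \<in> Ka" for w using that Ea(4) unfolding Ka_def by auto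
  have EbU: "Eb *v w = w" if "w \<in> Ub" for w using that Eb(3) unfolding Ub_def by auto
  have EbK: "Eb *v w = 0" if "w \<in> Kb" for w using that Eb(4) unfolding Kb_def by auto
  have Guk: "G (u + k) = y *v u + h k" if "u \<in> Ua" "k \<in> Ka" for u k
  proof -
    have "Ea *v (u + k) = u" using EaU[OF that(1)] EaK[OF that(2)] by (simp add: vec.add)
    then show ?thesis unfolding G_def by simp
  qed
  have surj: "surj ((*v) g)"
  proof -
    have "w \<in> range ((*v) g)" for w
    proof -
      have "Eb *v w \<in> Ub" using Eb(1) unfolding Ub_def .
      then obtain u where u: "u \<in> Ua" "Eb *v w = y *v u" using yUeq by blast
      have "w - Eb *v w \<in> Kb" using Eb(2) unfolding Kb_def by simp
      then obtain k where k: "k \<in> Ka" "w - Eb *v w = h k" using h(2) by blast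
      have "g *v (u + k) = w" unfolding gG Guk[OF u(1) k(1)] u(2)[symmetric] k(2)[symmetric] by simp
      then show ?thesis by blast
    qed
    then show ?thesis by blast
  qed
  have inv: "invertible g"
    using surj invertible_right_inverse matrix_right_invertible_surjective by blast
  have comm: "stable_part b ** g = g ** stable_part a"
    unfolding matrix_eq
  proof
    fix v
    define u where "u = Ea *v v"
    define k where "k = v - u"
    have u: "u \<in> Ua" using Ea(1) unfolding u_def Ua_def .
    have k: "k \<in> Ka" using Ea(2) unfolding k_def u_def Ka_def by simp
    have vuk: "v = u + k" unfolding k_def by simp
    have hk: "h k \<in> Kb" using h(2) k by blast
    have yu: "y *v u \<in> Ub" using yU u by blast
    have au: "a *v u \<in> Ua"
    proof -
      obtain z where "u = Ma *v z" using u unfolding Ua_def by blast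
      then have "a *v u = Ma *v (a *v z)"
        by (simp add: Ma_def matrix_vector_mul_assoc pow_comm)
      then show ?thesis unfolding Ua_def by blast
    qed
    have "(stable_part b ** g) *v v = b *v (Eb *v (y *v u + h k))"
      using Eb(5) gG Guk[OF u k] vuk by (simp add: matrix_vector_mul_assoc[symmetric])
    also have "\<dots> = b *v (y *v u)" using EbU[OF yu] EbK[OF hk] by (simp add: vec.add)
    also have "\<dots> = y *v (a *v u)"
      by (simp add: a_def b_def matrix_vector_mul_assoc matrix_mul_assoc)
    also have "\<dots> = G (a *v u + 0)" using Guk[OF au sKa[THEN vec.subspace_0]] by (simp add: h.zero)
    also have "\<dots> = (g ** stable_part a) *v v"
      using Ea(5) gG EaU[OF au] by (simp add: matrix_vector_mul_assoc[symmetric] u_def)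
    finally show "(stable_part b ** g) *v v = (g ** stable_part a) *v v" .
  qed
  show ?thesis using inv comm unfolding a_def b_def by blast
qed



theorem theorem1:
  fixes A B :: "('a::field)^'n^'n"
  shows "mconj A B \<longleftrightarrow>
    (\<exists>g :: 'a^'n^'n. invertible g \<and> stable_part B = g ** stable_part A ** matrix_inv g)"
proof
  assume "mconj A B"
  then have "\<exists>g :: 'a^'n^'n. invertible g \<and> stable_part B ** g = g ** stable_part A"
    unfolding mconj_def
  proof (induction rule: tranclp_induct)
    case (base y)
    then obtain p q where "A = p ** q" "y = q ** p" by (auto simp: primary_conj_def)
    then show ?case using primary_sim[of q p] by simp
  next
    case (step y z)
    obtain g :: "'a^'n^'n" where g: "invertible g" "stable_part y ** g = g ** stable_part A"
      using step.IH by blast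
    obtain p q where pq: "y = p ** q" "z = q ** p" using step.hyps(2) by (auto simp: primary_conj_def)
    obtain h :: "'a^'n^'n" where h: "invertible h" "stable_part z ** h = h ** stable_part y"
      using primary_sim[of q p] pq by auto
    have "stable_part z ** (h ** g) = (h ** g) ** stable_part A"
      by (metis g(2) h(2) matrix_mul_assoc)
    then show ?case using invertible_mult[OF h(1) g(1)] by blast
  qed
  then show "\<exists>g :: 'a^'n^'n. invertible g \<and> stable_part B = g ** stable_part A ** matrix_inv g"
    using comm_to_conj by blast
next
  assume "\<exists>g :: 'a^'n^'n. invertible g \<and> stable_part B = g ** stable_part A ** matrix_inv g"
  then show "mconj A B" using backward by blast
qed

end
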